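(* Let $A\subset\mathbb{N}_0$ be such that $A^2+A=\mathbb{N}_0$. Then (a) $\alpha_A\ge 1/3$; (b) $\beta_A\ge 1/2$; (c) $\alpha_A+\beta_A\ge 1$.
   Context: $\mathbb{N}_0$ is the set of nonnegative integers; $A^2=\{ab:a,b\in A\}$, $A^2+A=\{x+y:x\in A^2,y\in A\}$; $A(X)=|A\cap[1,X]|$. For $A\subset\mathbb{N}_0$, $$\alpha_A=\inf\Big\{t\ge 0: \liminf_{X\to\infty}\frac{A(X)}{X^t}<\infty\Big\},\qquad \beta_A=\inf\Big\{t\ge 0: \limsup_{X\to\infty}\frac{A(X)}{X^t}<\infty\Big\}.$$ *)

theory Defs
  imports "HOL-Analysis.Analysis" "HOL-Library.Liminf_Limsup"
begin

definition prodset :: "nat set \<Rightarrow> nat set" where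
  "prodset A = {a * b | a b. a \<in> A \<and> b \<in> A}"

definition sumset :: "nat set \<Rightarrow> nat set \<Rightarrow> nat set" where
  "sumset B C = {x + y | x y. x \<in> B \<and> y \<in> C}"

definition count_fn :: "nat set \<Rightarrow> real \<Rightarrow> nat" where
  "count_fn A X = card {n \<in> A. 1 \<le> n \<and> real n \<le> X}"

definition lower_exp :: "nat set \<Rightarrow> real" where
  "lower_exp A = Inf {t. t \<ge> 0 \<and>
      Liminf at_top (\<lambda>X. ereal (real (count_fn A X) / X powr t)) < \<infinity>}"

definition upper_exp :: "nat set \<Rightarrow> real" where
  "upper_exp A = Inf {t. t \<ge> 0 \<and>
      Limsup at_top (\<lambda>X. ereal (real (count_fn A X) / X powr t)) < \<infinity>}"

end

theory Submission
  imports Defs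
begin

lemma cnt_finite: "finite {n \<in> A. 1 \<le> n \<and> real n \<le> X}"
proof (rule finite_subset[of _ "{..nat \<lceil>X\<rceil>}"])
  show "{n \<in> A. 1 \<le> n \<and> real n \<le> X} \<subseteq> {..nat \<lceil>X\<rceil>}"
  proof
    fix n assume "n \<in> {n \<in> A. 1 \<le> n \<and> real n \<le> X}"
    then have "real n \<le> X" by auto
    then have "real n \<le> real (nat \<lceil>X\<rceil>)" by linarith
    then show "n \<in> {..nat \<lceil>X\<rceil>}" by simp
  qed
qed simp

lemma cnt_mono: "X \<le> Y \<Longrightarrow> count_fn A X \<le> count_fn A Y"
  unfolding count_fn_def by (rule card_mono[OF cnt_finite]) auto

lemma cnt_le: "0 \<le> X \<Longrightarrow> real (count_fn A X) \<le> X"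
proof -
  assume X: "0 \<le> X"
  have "{n \<in> A. 1 \<le> n \<and> real n \<le> X} \<subseteq> {1..nat \<lfloor>X\<rfloor>}"
  proof
    fix n assume "n \<in> {n \<in> A. 1 \<le> n \<and> real n \<le> X}"
    then have "real n \<le> X" "1 \<le> n" by auto
    then have "n \<le> nat \<lfloor>X\<rfloor>" by linarith
    then show "n \<in> {1..nat \<lfloor>X\<rfloor>}" using \<open>1 \<le> n\<close> by simp
  qed
  then have "count_fn A X \<le> card {1..nat \<lfloor>X\<rfloor>}"
    unfolding count_fn_def by (rule card_mono[rotated]) simp
  then have "count_fn A X \<le> nat \<lfloor>X\<rfloor>" by simp
  then show ?thesis using X by linarith
qed

lemma step_find:
  fixes g :: "nat \<Rightarrow> real"
  shows "0 < K \<Longrightarrow> g 0 \<le> x \<Longrightarrow> x \<le> g K \<Longrightarrow> \<exists>i<K. g i \<le> x \<and> x \<le> g (Suc i)"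
proof (induction K)
  case 0 then show ?case by simp
next
  case (Suc m)
  show ?case
  proof (cases "x \<le> g m \<and> 0 < m")
    case True
    then obtain i where "i < m" "g i \<le> x \<and> x \<le> g (Suc i)" using Suc by blast
    then show ?thesis by (intro exI[of _ i]) auto
  next
    case False
    then have "g m \<le> x"
      using Suc.prems by (cases "m = 0") auto
    then show ?thesis using Suc.prems by (intro exI[of _ m]) auto
  qed
qed

lemma final_contra:
  fixes E e :: real
  assumes e: "0 \<le> e" "e < 1"
    and fr: "\<And>y. \<exists>X\<ge>y. 1 \<le> X \<and> X \<le> E * X powr e"
  shows False
proof -
  define y where "y = max 1 ((\<bar>E\<bar> + 1) powr (1 / (1 - e))) + 1"
  obtain X where X: "X \<ge> y" "1 \<le> X" "X \<le> E * X powr e" using fr by blast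
  have Xpos: "0 < X" using X by simp
  have "X powr (1 - e) * X powr e = X" using Xpos
    by (simp add: powr_add[symmetric])
  moreover have "X powr e > 0" using Xpos by simp
  ultimately have "X powr (1 - e) \<le> E"
    using X(3) by (metis mult_le_cancel_right_pos)
  moreover have "(\<bar>E\<bar> + 1) powr (1 / (1 - e)) < X" using X(1) unfolding y_def by simp
  then have "((\<bar>E\<bar> + 1) powr (1 / (1 - e))) powr (1 - e) < X powr (1 - e)"
    using e by (intro powr_less_mono2) auto
  then have "\<bar>E\<bar> + 1 < X powr (1 - e)"
    using e by (simp add: powr_powr)
  ultimately show False by linarith
qed

definition prods :: "nat set \<Rightarrow> nat \<Rightarrow> nat set" where
  "prods A N = {a * b | a b. a \<in> A \<and> b \<in> A \<and> 1 \<le> a \<and> a \<le> b \<and> a * b \<le> N}"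

lemma prods_finite: "finite (prods A N)"
  by (rule finite_subset[of _ "{..N}"]) (auto simp: prods_def)

lemma cover:
  assumes H: "\<And>n. \<exists>a b c. a \<in> A \<and> b \<in> A \<and> c \<in> A \<and> n = a * b + c"
  shows "N + 1 \<le> (card (prods A N) + 1) * (count_fn A (real N) + 1)"
proof -
  define S where "S = {n \<in> A. 1 \<le> n \<and> real n \<le> real N}"
  have finS: "finite S" unfolding S_def by (rule cnt_finite)
  have "{0..N} \<subseteq> (\<lambda>(p, c). p + c) ` (insert 0 (prods A N) \<times> insert 0 S)"
  proof
    fix n assume n: "n \<in> {0..N}"
    obtain a b c where abc: "a \<in> A" "b \<in> A" "c \<in> A" "n = a * b + c" using H by blast
    have cS: "c \<in> insert 0 S" using abc n unfolding S_def by auto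
    have "a * b \<in> insert 0 (prods A N)"
    proof (cases "a = 0 \<or> b = 0")
      case True then show ?thesis by auto
    next
      case False
      show ?thesis
      proof (cases "a \<le> b")
        case True
        then have "a * b = a * b \<and> a \<in> A \<and> b \<in> A \<and> 1 \<le> a \<and> a \<le> b \<and> a * b \<le> N"
          using False abc n by auto
        then show ?thesis unfolding prods_def by blast
      next
        case f2: False
        then have "a * b = b * a \<and> b \<in> A \<and> a \<in> A \<and> 1 \<le> b \<and> b \<le> a \<and> b * a \<le> N"
          using False abc n by (auto simp: mult.commute)
        then show ?thesis unfolding prods_def by blast
      qed
    qed
    then show "n \<in> (\<lambda>(p, c). p + c) ` (insert 0 (prods A N) \<times> insert 0 S)"
      using cS abc(4) by force
  qed
  then have "card {0..N} \<le> card ((\<lambda>(p, c). p + c) ` (insert 0 (prods A N) \<times> insert 0 S))"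
    by (rule card_mono[rotated]) (simp add: finS prods_finite)
  also have "\<dots> \<le> card (insert 0 (prods A N) \<times> insert 0 S)" by (rule card_image_le) (simp add: finS prods_finite)
  also have "\<dots> = card (insert 0 (prods A N)) * card (insert 0 S)" by (rule card_cartesian_product)
  also have "\<dots> \<le> (card (prods A N) + 1) * (card S + 1)"
    by (intro mult_le_mono) (simp_all add: card_insert_le_m1 finS prods_finite card_insert_if)
  finally show ?thesis unfolding S_def count_fn_def by simp
qed

lemma prods_sq: "card (prods A N) \<le> count_fn A (real N) ^ 2"
proof -
  define S where "S = {n \<in> A. 1 \<le> n \<and> real n \<le> real N}"
  have finS: "finite S" unfolding S_def by (rule cnt_finite)
  have "prods A N \<subseteq> (\<lambda>(a, b). a * b) ` (S \<times> S)"
  proof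
    fix x assume "x \<in> prods A N"
    then obtain a b where ab: "x = a * b" "a \<in> A" "b \<in> A" "1 \<le> a" "a \<le> b" "a * b \<le> N"
      unfolding prods_def by blast
    have "a \<le> a * b" "b \<le> a * b" using ab by simp_all
    then have "a \<le> N" "b \<le> N" using ab(6) by linarith+
    then have "a \<in> S" "b \<in> S" using ab unfolding S_def by auto
    then show "x \<in> (\<lambda>(a, b). a * b) ` (S \<times> S)" using ab(1) by force
  qed
  then have "card (prods A N) \<le> card ((\<lambda>(a, b). a * b) ` (S \<times> S))"
    by (rule card_mono[rotated]) (simp add: finS)
  also have "\<dots> \<le> card (S \<times> S)" by (rule card_image_le) (simp add: finS)
  also have "\<dots> = card S ^ 2" by (simp add: card_cartesian_product power2_eq_square)
  finally show ?thesis unfolding S_def count_fn_def by simp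
qed

lemma prods_bound:
  fixes K :: nat and C t :: real
  assumes H: "\<And>X. 1 \<le> X \<Longrightarrow> real (count_fn A X) \<le> C * X powr t"
    and t: "0 \<le> t" and K: "0 < K" and N: "1 \<le> N"
  shows "real (card (prods A N)) \<le> real K * C^2 * real N powr (t * (1 + 1 / (2 * real K)))"
proof -
  have C: "0 \<le> C" using H[of 1] by simp
  define u where "u = (\<lambda>i::nat. (real i + 1) / (2 * real K))"
  define v where "v = (\<lambda>i::nat. 1 - real i / (2 * real K))"
  define Ai where "Ai = (\<lambda>i. {n \<in> A. 1 \<le> n \<and> real n \<le> real N powr u i})"
  define Bi where "Bi = (\<lambda>i. {n \<in> A. 1 \<le> n \<and> real n \<le> real N powr v i})"
  define g where "g = (\<lambda>i::nat. real N powr (real i / (2 * real K)))"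
  have Npos: "real N > 0" using N by simp
  have finAi: "finite (Ai i)" for i unfolding Ai_def by (rule cnt_finite)
  have finBi: "finite (Bi i)" for i unfolding Bi_def by (rule cnt_finite)
  have cov: "prods A N \<subseteq> (\<Union>i<K. (\<lambda>(a, b). a * b) ` (Ai i \<times> Bi i))"
  proof
    fix x assume "x \<in> prods A N"
    then obtain a b where ab: "x = a * b" "a \<in> A" "b \<in> A" "1 \<le> a" "a \<le> b" "a * b \<le> N"
      unfolding prods_def by blast
    have "g 0 = 1" unfolding g_def using Npos by simp
    then have g0: "g 0 \<le> real a" using ab by simp
    have "a * a \<le> N" using ab by (meson dual_order.trans mult_le_mono2)
    then have "real a * real a \<le> real N" by (metis of_nat_le_iff of_nat_mult)
    then have "real a \<le> sqrt (real N)" using real_le_rsqrt by (simp add: power2_eq_square)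
    moreover have "g K = sqrt (real N)" unfolding g_def using K Npos
      by (simp add: powr_half_sqrt[symmetric])
    ultimately have gK: "real a \<le> g K" by simp
    obtain i where i: "i < K" "g i \<le> real a" "real a \<le> g (Suc i)"
      using step_find[OF K g0 gK] by blast
    have "real a \<le> real N powr u i" using i(3) unfolding g_def u_def by (simp add: add.commute)
    then have aA: "a \<in> Ai i" using ab unfolding Ai_def by simp
    have gpos: "g i > 0" unfolding g_def using Npos by simp
    have "real b * real a \<le> real N" using ab(6) by (metis mult.commute of_nat_le_iff of_nat_mult)
    then have "real b \<le> real N / real a" using ab(4) by (simp add: field_simps)
    also have "\<dots> \<le> real N / g i" using i(2) gpos Npos by (intro divide_left_mono) auto
    also have "\<dots> = real N powr v i" unfolding g_def v_def using Npos
      by (simp add: powr_diff)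
    finally have bB: "b \<in> Bi i" using ab unfolding Bi_def by simp
    show "x \<in> (\<Union>i<K. (\<lambda>(a, b). a * b) ` (Ai i \<times> Bi i))"
      using i(1) aA bB ab(1) by force
  qed
  have "card (prods A N) \<le> card (\<Union>i<K. (\<lambda>(a, b). a * b) ` (Ai i \<times> Bi i))"
    by (rule card_mono[OF _ cov]) (simp add: finAi finBi)
  also have "\<dots> \<le> (\<Sum>i<K. card ((\<lambda>(a, b). a * b) ` (Ai i \<times> Bi i)))"
    by (rule card_UN_le) simp
  also have "\<dots> \<le> (\<Sum>i<K. card (Ai i) * card (Bi i))"
    by (intro sum_mono) (metis card_cartesian_product card_image_le finAi finBi finite_cartesian_product)
  finally have "real (card (prods A N)) \<le> (\<Sum>i<K. real (card (Ai i)) * real (card (Bi i)))"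
    by (metis (no_types, lifting) of_nat_le_iff of_nat_mult of_nat_sum sum.cong)
  also have "\<dots> \<le> (\<Sum>i<K. C^2 * real N powr (t * (1 + 1 / (2 * real K))))"
  proof (intro sum_mono)
    fix i assume i: "i \<in> {..<K}"
    have u0: "0 \<le> u i" unfolding u_def by simp
    have v0: "0 \<le> v i" unfolding v_def using i K by (simp add: field_simps)
    have "real (card (Ai i)) \<le> C * (real N powr u i) powr t"
      unfolding Ai_def using H[of "real N powr u i"] u0 N by (simp add: count_fn_def ge_one_powr_ge_zero)
    moreover have "real (card (Bi i)) \<le> C * (real N powr v i) powr t"
      unfolding Bi_def using H[of "real N powr v i"] v0 N by (simp add: count_fn_def ge_one_powr_ge_zero)
    ultimately have "real (card (Ai i)) * real (card (Bi i)) \<le> (C * (real N powr u i) powr t) * (C * (real N powr v i) powr t)"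
      by (intro mult_mono) (auto intro: order_trans)
    also have "\<dots> = C^2 * real N powr (u i * t + v i * t)"
      by (simp add: powr_powr powr_add power2_eq_square)
    also have "u i * t + v i * t = t * (1 + 1 / (2 * real K))"
      unfolding u_def v_def using K by (simp add: field_simps)
    finally show "real (card (Ai i)) * real (card (Bi i)) \<le> C^2 * real N powr (t * (1 + 1 / (2 * real K)))" .
  qed
  also have "\<dots> = real K * C^2 * real N powr (t * (1 + 1 / (2 * real K)))" by simp
  finally show ?thesis .
qed

lemma ereal_bound: "(L::ereal) < \<infinity> \<Longrightarrow> \<exists>B. L < ereal B"
  by (cases L) (auto intro: exI[of _ "real_of_ereal L + 1"] exI[of _ 0])

lemma upper_all:
  assumes L: "Limsup at_top (\<lambda>X. ereal (real (count_fn A X) / X powr t)) < \<infinity>"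
    and t: "0 \<le> t"
  shows "\<exists>C. \<forall>X\<ge>1. real (count_fn A X) \<le> C * X powr t"
proof -
  obtain B where B: "Limsup at_top (\<lambda>X. ereal (real (count_fn A X) / X powr t)) < ereal B"
    using ereal_bound[OF L] by blast
  have "\<forall>\<^sub>F X in at_top. ereal (real (count_fn A X) / X powr t) < ereal B"
    by (rule Limsup_lessD[OF B])
  then obtain X0 where X0: "\<And>X. X \<ge> X0 \<Longrightarrow> real (count_fn A X) / X powr t < B"
    unfolding eventually_at_top_linorder by auto
  define X1 where "X1 = max X0 1"
  define C where "C = max B (real (count_fn A X1))"
  have "real (count_fn A X) \<le> C * X powr t" if X: "X \<ge> 1" for X
  proof (cases "X \<ge> X1")
    case True
    then have "real (count_fn A X) / X powr t < B" using X0 unfolding X1_def by simp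
    then have "real (count_fn A X) \<le> B * X powr t" using X by (simp add: field_simps)
    also have "\<dots> \<le> C * X powr t" unfolding C_def using X by (intro mult_right_mono) auto
    finally show ?thesis .
  next
    case False
    then have "count_fn A X \<le> count_fn A X1" by (intro cnt_mono) simp
    then have "real (count_fn A X) \<le> real (count_fn A X1)" by simp
    also have "\<dots> \<le> real (count_fn A X1) * X powr t"
      using ge_one_powr_ge_zero[OF X t] by (simp add: mult_le_cancel_left1)
    also have "\<dots> \<le> C * X powr t" unfolding C_def using X by (intro mult_right_mono) auto
    finally show ?thesis .
  qed
  then show ?thesis by blast
qed

lemma lower_freq:
  assumes L: "Liminf at_top (\<lambda>X. ereal (real (count_fn A X) / X powr s)) < \<infinity>"
  shows "\<exists>D\<ge>0. \<forall>y. \<exists>X\<ge>y. 1 \<le> X \<and> real (count_fn A X) \<le> D * X powr s"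
proof -
  obtain B where B: "Liminf at_top (\<lambda>X. ereal (real (count_fn A X) / X powr s)) < ereal B"
    using ereal_bound[OF L] by blast
  have fr: "\<exists>X\<ge>y. real (count_fn A X) / X powr s < B" for y
  proof (rule ccontr)
    assume "\<not> (\<exists>X\<ge>y. real (count_fn A X) / X powr s < B)"
    then have "\<forall>\<^sub>F X in at_top. ereal B \<le> ereal (real (count_fn A X) / X powr s)"
      unfolding eventually_at_top_linorder by (auto simp: not_less)
    then have "ereal B \<le> Liminf at_top (\<lambda>X. ereal (real (count_fn A X) / X powr s))"
      by (rule Liminf_bounded)
    then show False using B by simp
  qed
  have "\<exists>X\<ge>y. 1 \<le> X \<and> real (count_fn A X) \<le> max B 0 * X powr s" for y
  proof -
    obtain X where X: "X \<ge> max y 1" "real (count_fn A X) / X powr s < B" using fr by blast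
    then have "real (count_fn A X) \<le> B * X powr s" by (simp add: field_simps)
    also have "\<dots> \<le> max B 0 * X powr s" by (intro mult_right_mono) auto
    finally show ?thesis using X by auto
  qed
  then show ?thesis by (intro exI[of _ "max B 0"]) auto
qed

theorem proposition3p1:
  fixes A :: "nat set"
  assumes "sumset (prodset A) A = UNIV"
  shows "lower_exp A \<ge> 1/3 \<and> upper_exp A \<ge> 1/2 \<and> lower_exp A + upper_exp A \<ge> 1"
proof -
  have H: "\<And>n. \<exists>a b c. a \<in> A \<and> b \<in> A \<and> c \<in> A \<and> n = a * b + c"
  proof -
    fix n :: nat
    have "n \<in> sumset (prodset A) A" using assms by simp
    then show "\<exists>a b c. a \<in> A \<and> b \<in> A \<and> c \<in> A \<and> n = a * b + c"
      unfolding sumset_def prodset_def by blast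
  qed
  define L where "L = {t. t \<ge> 0 \<and> Liminf at_top (\<lambda>X. ereal (real (count_fn A X) / X powr t)) < \<infinity>}"
  define U where "U = {t. t \<ge> 0 \<and> Limsup at_top (\<lambda>X. ereal (real (count_fn A X) / X powr t)) < \<infinity>}"
  have la: "lower_exp A = Inf L" unfolding lower_exp_def L_def by simp
  have ua: "upper_exp A = Inf U" unfolding upper_exp_def U_def by simp
  have "Limsup at_top (\<lambda>X. ereal (real (count_fn A X) / X powr 1)) \<le> ereal 1"
  proof (rule Limsup_bounded)
    show "\<forall>\<^sub>F X in at_top. ereal (real (count_fn A X) / X powr 1) \<le> ereal 1"
      unfolding eventually_at_top_linorder
      by (rule exI[of _ 1]) (auto simp: cnt_le)
  qed
  then have U1: "1 \<in> U" unfolding U_def by (auto intro: le_less_trans)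
  have LL: "Liminf at_top f \<le> Limsup at_top f" for f :: "real \<Rightarrow> ereal"
    by (rule Liminf_le_Limsup) simp
  have UL: "U \<subseteq> L"
  proof
    fix x assume "x \<in> U"
    then have x0: "0 \<le> x" and lim: "Limsup at_top (\<lambda>X. ereal (real (count_fn A X) / X powr x)) < \<infinity>"
      unfolding U_def by auto
    show "x \<in> L" unfolding L_def mem_Collect_eq using x0 order.strict_trans1[OF LL lim] by (rule conjI)
  qed
  have bU: "bdd_below U" unfolding U_def by (rule bdd_belowI[of _ 0]) auto
  have bL: "bdd_below L" unfolding L_def by (rule bdd_belowI[of _ 0]) auto
  have ab: "Inf L \<le> Inf U" using U1 bL UL by (intro cInf_superset_mono) auto
  have geN: "real N + 1 \<le> (real (card (prods A N)) + 1) * (real (count_fn A (real N)) + 1)" for N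
  proof -
    have "real (N + 1) \<le> real ((card (prods A N) + 1) * (count_fn A (real N) + 1))"
      using cover[OF H, of N] by (simp only: of_nat_le_iff)
    then show ?thesis by (simp add: algebra_simps)
  qed
  have c: "Inf L + Inf U \<ge> 1"
  proof (rule ccontr)
    assume "\<not> Inf L + Inf U \<ge> 1"
    then have lt: "Inf L + Inf U < 1" by simp
    define \<epsilon> where "\<epsilon> = (1 - Inf L - Inf U) / 3"
    have e0: "\<epsilon> > 0" using lt unfolding \<epsilon>_def by simp
    obtain s where s: "s \<in> L" "s < Inf L + \<epsilon>" using cInf_lessD[of L "Inf L + \<epsilon>"] U1 UL e0 by auto
    obtain t where t: "t \<in> U" "t < Inf U + \<epsilon>" using cInf_lessD[of U "Inf U + \<epsilon>"] U1 e0 by auto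
    have s0: "0 \<le> s" and t0: "0 \<le> t" using s t unfolding L_def U_def by auto
    have e3: "Inf L + Inf U + 3 * \<epsilon> = 1" unfolding \<epsilon>_def by (simp add: field_simps)
    have st: "s + t < 1" using s(2) t(2) e3 e0 by linarith
    define K where "K = nat \<lceil>t / (1 - s - t)\<rceil> + 1"
    have K0: "0 < K" unfolding K_def by simp
    have "real K > t / (1 - s - t)" unfolding K_def by linarith
    then have "t < real K * (1 - s - t)" using st by (simp add: field_simps)
    then have tK: "t / (2 * real K) < 1 - s - t" using K0 t0 by (simp add: field_simps)
    define a where "a = t * (1 + 1 / (2 * real K))"
    have a0: "0 \<le> a" unfolding a_def using t0 by simp
    have as: "a + s < 1" unfolding a_def using tK by (simp add: distrib_left)
    obtain C where C: "\<And>X. X \<ge> 1 \<Longrightarrow> real (count_fn A X) \<le> C * X powr t"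
      using upper_all[of A t] t t0 unfolding U_def by auto
    obtain D where D: "D \<ge> 0" "\<And>y. \<exists>X\<ge>y. 1 \<le> X \<and> real (count_fn A X) \<le> D * X powr s"
      using lower_freq[of A s] s unfolding L_def by auto
    have C0: "0 \<le> C" using C[of 1] by simp
    show False
    proof (rule final_contra[of "a + s" "(real K * C^2 + 1) * (D + 1)"])
      show "0 \<le> a + s" "a + s < 1" using a0 s0 as by auto
      fix y
      obtain X where X: "X \<ge> y" "1 \<le> X" "real (count_fn A X) \<le> D * X powr s" using D(2) by blast
      define N where "N = nat \<lfloor>X\<rfloor>"
      have N1: "1 \<le> N" and NX: "real N \<le> X" "X < real N + 1" unfolding N_def using X(2) by linarith+
      have "real (card (prods A N)) \<le> real K * C^2 * real N powr a"
        unfolding a_def by (rule prods_bound[OF C t0 K0 N1])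
      also have "\<dots> \<le> real K * C^2 * X powr a"
        using a0 NX by (intro mult_left_mono powr_mono2) auto
      finally have P: "real (card (prods A N)) \<le> real K * C^2 * X powr a" .
      have "count_fn A (real N) \<le> count_fn A X" using NX by (intro cnt_mono)
      then have Q: "real (count_fn A (real N)) \<le> D * X powr s" using X(3) by linarith
      have Xa: "1 \<le> X powr a" and Xs: "1 \<le> X powr s" using X(2) a0 s0 by (auto intro: ge_one_powr_ge_zero)
      have "X < (real (card (prods A N)) + 1) * (real (count_fn A (real N)) + 1)"
        using NX geN[of N] by linarith
      also have "\<dots> \<le> (real K * C^2 * X powr a + X powr a) * (D * X powr s + X powr s)"
        using P Q Xa Xs by (intro mult_mono) auto
      also have "\<dots> = (real K * C^2 + 1) * (D + 1) * X powr (a + s)"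
        by (simp add: powr_add algebra_simps)
      finally show "\<exists>X\<ge>y. 1 \<le> X \<and> X \<le> (real K * C^2 + 1) * (D + 1) * X powr (a + s)"
        using X by (intro exI[of _ X]) auto
    qed
  qed
  have a: "Inf L \<ge> 1/3"
  proof (rule ccontr)
    assume "\<not> Inf L \<ge> 1/3"
    then obtain s where s: "s \<in> L" "s < 1/3" using cInf_lessD[of L "1/3"] U1 UL by force
    have s0: "0 \<le> s" using s unfolding L_def by auto
    obtain D where D: "D \<ge> 0" "\<And>y. \<exists>X\<ge>y. 1 \<le> X \<and> real (count_fn A X) \<le> D * X powr s"
      using lower_freq[of A s] s unfolding L_def by auto
    show False
    proof (rule final_contra[of "3 * s" "(D + 1) * (D + 1) * (D + 1)"])
      show "0 \<le> 3 * s" "3 * s < 1" using s0 s by auto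
      fix y
      obtain X where X: "X \<ge> y" "1 \<le> X" "real (count_fn A X) \<le> D * X powr s" using D(2) by blast
      define N where "N = nat \<lfloor>X\<rfloor>"
      have N1: "1 \<le> N" and NX: "real N \<le> X" "X < real N + 1" unfolding N_def using X(2) by linarith+
      define c where "c = real (count_fn A (real N))"
      have c0: "0 \<le> c" unfolding c_def by simp
      have "count_fn A (real N) \<le> count_fn A X" using NX by (intro cnt_mono)
      then have Q: "c \<le> D * X powr s" using X(3) unfolding c_def by linarith
      have P: "real (card (prods A N)) \<le> c * c"
        unfolding c_def using prods_sq[of A N] by (metis of_nat_le_iff of_nat_mult power2_eq_square)
      have Xs: "1 \<le> X powr s" using X(2) s0 by (auto intro: ge_one_powr_ge_zero)
      have "X < (real (card (prods A N)) + 1) * (c + 1)"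
        using NX geN[of N] unfolding c_def by linarith
      also have "\<dots> \<le> (c * c + 1) * (c + 1)" using P c0 by (intro mult_right_mono) auto
      also have "\<dots> \<le> (c + 1) * (c + 1) * (c + 1)" using c0 by (intro mult_right_mono) (auto simp: algebra_simps)
      also have "\<dots> \<le> (D * X powr s + X powr s) * (D * X powr s + X powr s) * (D * X powr s + X powr s)"
        using Q Xs c0 by (intro mult_mono) auto
      also have "\<dots> = (D + 1) * (D + 1) * (D + 1) * X powr (3 * s)"
      proof -
        have "X powr (3 * s) = X powr s * X powr s * X powr s"
          by (simp add: powr_add[symmetric])
        then show ?thesis by (simp add: algebra_simps)
      qed
      finally show "\<exists>X\<ge>y. 1 \<le> X \<and> X \<le> (D + 1) * (D + 1) * (D + 1) * X powr (3 * s)"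
        using X by (intro exI[of _ X]) auto
    qed
  qed
  show ?thesis unfolding la ua using a c ab by auto
qed

end
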